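(* Assume (H3.1) and (H3.2). The function $\widetilde W(t,x):=\lim_{m\to\infty}W_m(t,x)$ (a nondecreasing limit; $\widetilde W$ is lower semicontinuous with at most linear growth) is a viscosity supersolution of $$\min\Big\{w(t,x)-h(t,x),\;-\partial_tw(t,x)-H^-(t,x,w,Dw,D^2w)\Big\}=0,\ (t,x)\in[0,T)\times\mathbb R^n,\qquad w(T,x)=\Phi(x).$$
   Context: Setting. Fix $T>0$. Let $\Omega=C_0([0,T];\mathbb R^d)$, $P$ the Wiener measure, $B$ the coordinate Brownian motion, $\mathbb F=(\mathcal F_s)$ its $P$-augmented natural filtration. $U,V$ are compact metric spaces. $b:[0,T]\times\mathbb R^n\times U\times V\to\mathbb R^n$ and $\sigma:[0,T]\times\mathbb R^n\times U\times V\to\mathbb R^{n\times d}$ satisfy (H3.1): for each $x$ they are continuous in $(t,u,v)$, and Lipschitz in $x$ uniformly in $(t,u,v)$. $\Phi:\mathbb R^n\to\mathbb R$, $h:[0,T]\times\mathbb R^n\to\mathbb R$, $f:[0,T]\times\mathbb R^n\times\mathbb R\times\mathbb R^d\times U\times V\to\mathbb R$ satisfy (H3.2): for each $(x,y,z)$, $f(\cdot,x,y,z,\cdot,\cdot)$ is continuous in $(t,u,v)$ and $f$ is Lipschitz in $(x,y,z)$ uniformly in $(t,u,v)$; $\Phi$ is Lipschitz; $h(\cdot,x)$ is continuous for each $x$, $h$ is Lipschitz in $x$ uniformly in $t$, and $h(T,x)\le\Phi(x)$. $\mathcal U_{t,s}$, $\mathcal V_{t,s}$ are the sets of $U$-,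 resp. $V$-valued progressively measurable processes on $[t,s]$; $\mathcal B_{t,s}$ is the set of nonanticipative strategies $\beta:\mathcal U_{t,s}\to\mathcal V_{t,s}$. $X^{t,x;u,v}$ solves $dX_s=b(s,X_s,u_s,v_s)ds+\sigma(s,X_s,u_s,v_s)dB_s$, $X_t=x$. For $m\in\mathbb N$, $({}^mY^{t,x;u,v},{}^mZ^{t,x;u,v})$ solves the BSDE ${}^mY_s=\Phi(X^{t,x;u,v}_T)+\int_s^T f(r,X^{t,x;u,v}_r,{}^mY_r,{}^mZ_r,u_r,v_r)dr+m\int_s^T({}^mY_r-h(r,X^{t,x;u,v}_r))^-dr-\int_s^T{}^mZ_rdB_r$, $s\in[t,T]$; $W_m(t,x)=\operatorname{essinf}_{\beta\in\mathcal B_{t,T}}\operatorname{esssup}_{u\in\mathcal U_{t,T}}{}^mY^{t,x;u,\beta(u)}_t$. Each $W_m$ is deterministic, continuous, of linear growth, nondecreasing in $m$, and is the viscosity solution of $-\partial_tW_m-\sup_u\inf_v\{\tfrac12\mathrm{tr}(\sigma\sigma^TD^2W_m)+DW_m\cdot b+f(t,x,W_m,DW_m\sigma,u,v)+m(W_m-h(t,x))^-\}=0$, $W_m(T,\cdot)=\Phi$. Hamiltonian: $H^-(t,x,y,q,X)=\sup_{u\in U}\inf_{v\in V}\{\tfrac12\mathrm{tr}(\sigma\sigma^T(t,x,u,v)X)+q\cdot b(t,x,u,v)+f(t,x,y,q\sigma(t,x,u,v),u,v)\}$. Supersolution: a lower semicontinuous $w$ is a viscosity supersolution if $w(T,x)\ge\Phi(x)$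 for all $x$ and, for every $\varphi\in C^3_{l,b}([0,T]\times\mathbb R^n)$ ($C^3$ with bounded derivatives of orders 1–3) such that $w-\varphi$ attains a local minimum at $(t,x)\in[0,T)\times\mathbb R^n$, $\min\{w(t,x)-h(t,x),-\partial_t\varphi(t,x)-H^-(t,x,w(t,x),D\varphi(t,x),D^2\varphi(t,x))\}\ge0$. *)

theory Defs
  imports "HOL-Analysis.Analysis"
begin

definition C3lb :: "(real \<times> (real^'n) \<Rightarrow> real) \<Rightarrow> bool" where
  "C3lb \<phi> \<longleftrightarrow>
     (\<exists>(D1 :: real \<times> (real^'n) \<Rightarrow> (real \<times> (real^'n)) \<Rightarrow>\<^sub>L real)
        (D2 :: real \<times> (real^'n) \<Rightarrow> (real \<times> (real^'n)) \<Rightarrow>\<^sub>L ((real \<times> (real^'n)) \<Rightarrow>\<^sub>L real))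
        (D3 :: real \<times> (real^'n) \<Rightarrow> (real \<times> (real^'n)) \<Rightarrow>\<^sub>L ((real \<times> (real^'n)) \<Rightarrow>\<^sub>L ((real \<times> (real^'n)) \<Rightarrow>\<^sub>L real))).
        (\<forall>z. (\<phi> has_derivative blinfun_apply (D1 z)) (at z)) \<and>
        (\<forall>z. (D1 has_derivative blinfun_apply (D2 z)) (at z)) \<and>
        (\<forall>z. (D2 has_derivative blinfun_apply (D3 z)) (at z)) \<and>
        continuous_on UNIV D3 \<and>
        bounded (range D1) \<and> bounded (range D2) \<and> bounded (range D3))"

definition dt :: "(real \<times> (real^'n) \<Rightarrow> real) \<Rightarrow> real \<Rightarrow> real^'n \<Rightarrow> real" where
  "dt \<phi> t x = frechet_derivative \<phi> (at (t, x)) (1, 0)"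

definition Dx :: "(real \<times> (real^'n) \<Rightarrow> real) \<Rightarrow> real \<Rightarrow> real^'n \<Rightarrow> real^'n" where
  "Dx \<phi> t x = (\<chi> i. frechet_derivative \<phi> (at (t, x)) (0, axis i 1))"

definition D2x :: "(real \<times> (real^'n) \<Rightarrow> real) \<Rightarrow> real \<Rightarrow> real^'n \<Rightarrow> real^'n^'n" where
  "D2x \<phi> t x = (\<chi> i j. frechet_derivative
        (\<lambda>w. frechet_derivative \<phi> (at w) (0, axis j 1)) (at (t, x)) (0, axis i 1))"

definition ham_int ::
  "(real \<Rightarrow> real^'n \<Rightarrow> 'u \<Rightarrow> 'v \<Rightarrow> real^'n) \<Rightarrow>
   (real \<Rightarrow> real^'n \<Rightarrow> 'u \<Rightarrow> 'v \<Rightarrow> real^'d^'n) \<Rightarrow>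
   (real \<Rightarrow> real^'n \<Rightarrow> real \<Rightarrow> real^'d \<Rightarrow> 'u \<Rightarrow> 'v \<Rightarrow> real) \<Rightarrow>
   real \<Rightarrow> real^'n \<Rightarrow> real \<Rightarrow> real^'n \<Rightarrow> real^'n^'n \<Rightarrow> 'u \<Rightarrow> 'v \<Rightarrow> real" where
  "ham_int b \<sigma> f t x y q X u v =
     (1/2) * trace (\<sigma> t x u v ** transpose (\<sigma> t x u v) ** X) + q \<bullet> b t x u v
     + f t x y (q v* \<sigma> t x u v) u v"

definition Hminus ::
  "'u set \<Rightarrow> 'v set \<Rightarrow>
   (real \<Rightarrow> real^'n \<Rightarrow> 'u \<Rightarrow> 'v \<Rightarrow> real^'n) \<Rightarrow>
   (real \<Rightarrow> real^'n \<Rightarrow> 'u \<Rightarrow> 'v \<Rightarrow> real^'d^'n) \<Rightarrow>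
   (real \<Rightarrow> real^'n \<Rightarrow> real \<Rightarrow> real^'d \<Rightarrow> 'u \<Rightarrow> 'v \<Rightarrow> real) \<Rightarrow>
   real \<Rightarrow> real^'n \<Rightarrow> real \<Rightarrow> real^'n \<Rightarrow> real^'n^'n \<Rightarrow> real" where
  "Hminus U V b \<sigma> f t x y q X = (SUP u\<in>U. INF v\<in>V. ham_int b \<sigma> f t x y q X u v)"

definition Hpen ::
  "'u set \<Rightarrow> 'v set \<Rightarrow>
   (real \<Rightarrow> real^'n \<Rightarrow> 'u \<Rightarrow> 'v \<Rightarrow> real^'n) \<Rightarrow>
   (real \<Rightarrow> real^'n \<Rightarrow> 'u \<Rightarrow> 'v \<Rightarrow> real^'d^'n) \<Rightarrow>
   (real \<Rightarrow> real^'n \<Rightarrow> real \<Rightarrow> real^'d \<Rightarrow> 'u \<Rightarrow> 'v \<Rightarrow> real) \<Rightarrow>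
   (real \<Rightarrow> real^'n \<Rightarrow> real) \<Rightarrow> nat \<Rightarrow>
   real \<Rightarrow> real^'n \<Rightarrow> real \<Rightarrow> real^'n \<Rightarrow> real^'n^'n \<Rightarrow> real" where
  "Hpen U V b \<sigma> f h m t x y q X =
     (SUP u\<in>U. INF v\<in>V. ham_int b \<sigma> f t x y q X u v + real m * max 0 (h t x - y))"

definition loc_min :: "real \<Rightarrow> (real \<Rightarrow> real^'n \<Rightarrow> real) \<Rightarrow> (real \<times> (real^'n) \<Rightarrow> real)
                       \<Rightarrow> real \<Rightarrow> real^'n \<Rightarrow> bool" where
  "loc_min T w \<phi> t x \<longleftrightarrow> (\<exists>\<delta>>0. \<forall>s y. s \<in> {0..T} \<and> dist (s, y) (t, x) < \<delta> \<longrightarrow>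
       w s y - \<phi> (s, y) \<ge> w t x - \<phi> (t, x))"

definition loc_max :: "real \<Rightarrow> (real \<Rightarrow> real^'n \<Rightarrow> real) \<Rightarrow> (real \<times> (real^'n) \<Rightarrow> real)
                       \<Rightarrow> real \<Rightarrow> real^'n \<Rightarrow> bool" where
  "loc_max T w \<phi> t x \<longleftrightarrow> (\<exists>\<delta>>0. \<forall>s y. s \<in> {0..T} \<and> dist (s, y) (t, x) < \<delta> \<longrightarrow>
       w s y - \<phi> (s, y) \<le> w t x - \<phi> (t, x))"

definition lsc_on :: "real \<Rightarrow> (real \<Rightarrow> real^'n \<Rightarrow> real) \<Rightarrow> bool" where
  "lsc_on T w \<longleftrightarrow> (\<forall>t\<in>{0..T}. \<forall>x. \<forall>e>0. \<exists>\<delta>>0. \<forall>s y. s \<in> {0..T} \<and>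
       dist (s, y) (t, x) < \<delta> \<longrightarrow> w s y > w t x - e)"

definition visc_sol_pen where
  "visc_sol_pen T U V b \<sigma> f h \<Phi> m W \<longleftrightarrow>
     (\<forall>x. W T x = \<Phi> x) \<and>
     (\<forall>\<phi> t x. C3lb \<phi> \<and> 0 \<le> t \<and> t < T \<and> loc_max T W \<phi> t x \<longrightarrow>
        - dt \<phi> t x - Hpen U V b \<sigma> f h m t x (W t x) (Dx \<phi> t x) (D2x \<phi> t x) \<le> 0) \<and>
     (\<forall>\<phi> t x. C3lb \<phi> \<and> 0 \<le> t \<and> t < T \<and> loc_min T W \<phi> t x \<longrightarrow>
        - dt \<phi> t x - Hpen U V b \<sigma> f h m t x (W t x) (Dx \<phi> t x) (D2x \<phi> t x) \<ge> 0)"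

definition visc_super_obst where
  "visc_super_obst T U V b \<sigma> f h \<Phi> w \<longleftrightarrow>
     lsc_on T w \<and>
     (\<forall>x. w T x \<ge> \<Phi> x) \<and>
     (\<forall>\<phi> t x. C3lb \<phi> \<and> 0 \<le> t \<and> t < T \<and> loc_min T w \<phi> t x \<longrightarrow>
        min (w t x - h t x)
            (- dt \<phi> t x - Hminus U V b \<sigma> f t x (w t x) (Dx \<phi> t x) (D2x \<phi> t x)) \<ge> 0)"

end

theory Submission
  imports Defs
begin


definition gg :: "real \<Rightarrow> real" where "gg r = 3/2 - 2* cos r + cos(2*r)/2"
definition g1 :: "real \<Rightarrow> real" where "g1 r = 2* sin r - sin(2*r)"
definition g2 :: "real \<Rightarrow> real" where "g2 r = 2* cos r - 2* cos(2*r)"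
definition g3 :: "real \<Rightarrow> real" where "g3 r = -2* sin r + 4* sin(2*r)"

lemma gg_deriv: "(gg has_real_derivative g1 r) (at r)"
  unfolding gg_def g1_def by (auto intro!: derivative_eq_intros)
lemma g1_deriv: "(g1 has_real_derivative g2 r) (at r)"
  unfolding g2_def g1_def by (auto intro!: derivative_eq_intros)
lemma g2_deriv: "(g2 has_real_derivative g3 r) (at r)"
  unfolding g2_def g3_def by (auto intro!: derivative_eq_intros)
lemma g1_bd: "\<bar>g1 r\<bar> \<le> 3" unfolding g1_def
  using abs_sin_le_one[of r] abs_sin_le_one[of "2*r"] by linarith
lemma g2_bd: "\<bar>g2 r\<bar> \<le> 4" unfolding g2_def
  using abs_cos_le_one[of r] abs_cos_le_one[of "2*r"] by linarith
lemma g3_bd: "\<bar>g3 r\<bar> \<le> 6" unfolding g3_def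
  using abs_sin_le_one[of r] abs_sin_le_one[of "2*r"] by linarith
lemma gg_eq: "gg r = (1 - cos r)^2"
  unfolding gg_def cos_double_cos by (simp add: power2_eq_square field_simps)
lemma gg_nonneg: "gg r \<ge> 0" by (simp add: gg_eq)

lemma gg_zero: assumes "gg r = 0" "\<bar>r\<bar> < 1" shows "r = 0"
proof -
  have "cos r = 1" using assms by (simp add: gg_eq)
  then obtain n::int where "r = of_int n * 2 * pi" using cos_one_2pi_int by blast
  have "n = 0"
  proof (rule ccontr)
    assume "n \<noteq> 0"
    hence "\<bar>real_of_int n\<bar> \<ge> 1" by linarith
    hence "\<bar>r\<bar> \<ge> 2*pi" using \<open>r = _\<close> by (simp add: abs_mult)
    thus False using assms(2) pi_gt3 by linarith
  qed
  thus ?thesis using \<open>r = _\<close> by simp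
qed



definition IL :: "'a::real_inner \<Rightarrow> 'a \<Rightarrow>\<^sub>L real" where "IL k = blinfun_inner_left k"
definition P2 :: "'a::real_inner \<Rightarrow> 'a \<Rightarrow>\<^sub>L ('a \<Rightarrow>\<^sub>L real)" where
  "P2 k = blinfun_scaleR_left (IL k) o\<^sub>L IL k"
definition P3 :: "'a::real_inner \<Rightarrow> 'a \<Rightarrow>\<^sub>L ('a \<Rightarrow>\<^sub>L ('a \<Rightarrow>\<^sub>L real))" where
  "P3 k = blinfun_scaleR_left (P2 k) o\<^sub>L IL k"

lemma IL_apply[simp]: "blinfun_apply (IL k) h = h \<bullet> k" by (simp add: IL_def)
lemma P2_apply[simp]: "blinfun_apply (P2 k) h = (h \<bullet> k) *\<^sub>R IL k" by (simp add: P2_def)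
lemma P3_apply[simp]: "blinfun_apply (P3 k) h = (h \<bullet> k) *\<^sub>R P2 k" by (simp add: P3_def)

lemma sc_deriv:
  fixes M :: "'b::real_normed_vector" and z0 k :: "'a::real_inner"
  assumes "\<And>r. (g has_real_derivative g' r) (at r)"
  shows "((\<lambda>z. g ((z - z0) \<bullet> k) *\<^sub>R M) has_derivative (\<lambda>h. (g' ((z - z0) \<bullet> k) * (h \<bullet> k)) *\<^sub>R M)) (at z)"
proof -
  have d1: "((\<lambda>z. (z - z0) \<bullet> k) has_derivative (\<lambda>h. h \<bullet> k)) (at z)"
    by (auto intro!: derivative_eq_intros)
  have d2: "(g has_derivative (*) (g' ((z - z0) \<bullet> k))) (at ((z - z0) \<bullet> k))"
    using assms[of "(z - z0) \<bullet> k"] by (simp add: has_field_derivative_def)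
  have "((\<lambda>z. g ((z - z0) \<bullet> k)) has_derivative (\<lambda>h. g' ((z - z0) \<bullet> k) * (h \<bullet> k))) (at z)"
    using has_derivative_compose[OF d1 d2] by (simp add: o_def)
  from has_derivative_scaleR_left[OF this, of M] show ?thesis by (simp add: o_def)
qed

context fixes z0 :: "'a::euclidean_space" begin

definition psi where "psi z = (\<Sum>k\<in>Basis. gg ((z - z0) \<bullet> k))"
definition E1 where "E1 z = (\<Sum>k\<in>Basis. g1 ((z - z0) \<bullet> k) *\<^sub>R IL k)"
definition E2 where "E2 z = (\<Sum>k\<in>Basis. g2 ((z - z0) \<bullet> k) *\<^sub>R P2 k)"
definition E3 where "E3 z = (\<Sum>k\<in>Basis. g3 ((z - z0) \<bullet> k) *\<^sub>R P3 k)"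

lemma psi_d1: "(psi has_derivative blinfun_apply (E1 z)) (at z)"
proof -
  have "((\<lambda>z. \<Sum>k\<in>Basis. gg ((z - z0) \<bullet> k) *\<^sub>R (1::real)) has_derivative
        (\<lambda>h. \<Sum>k\<in>Basis. (g1 ((z - z0) \<bullet> k) * (h \<bullet> k)) *\<^sub>R (1::real))) (at z)"
    by (intro has_derivative_sum sc_deriv gg_deriv)
  moreover have "(\<lambda>h. \<Sum>k\<in>Basis. (g1 ((z - z0) \<bullet> k) * (h \<bullet> k)) *\<^sub>R (1::real)) = blinfun_apply (E1 z)"
    by (auto simp: fun_eq_iff E1_def blinfun.sum_left blinfun.scaleR_left intro!: sum.cong)
  ultimately show ?thesis by (simp add: psi_def[abs_def])
qed

lemma E1_d: "(E1 has_derivative blinfun_apply (E2 z)) (at z)"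
proof -
  have "((\<lambda>z. \<Sum>k\<in>Basis. g1 ((z - z0) \<bullet> k) *\<^sub>R IL k) has_derivative
        (\<lambda>h. \<Sum>k\<in>Basis. (g2 ((z - z0) \<bullet> k) * (h \<bullet> k)) *\<^sub>R IL k)) (at z)"
    by (intro has_derivative_sum sc_deriv g1_deriv)
  moreover have "(\<lambda>h. \<Sum>k\<in>Basis. (g2 ((z - z0) \<bullet> k) * (h \<bullet> k)) *\<^sub>R IL k) = blinfun_apply (E2 z)"
    by (auto simp: fun_eq_iff E2_def blinfun.sum_left blinfun.scaleR_left intro!: sum.cong)
  ultimately show ?thesis by (simp add: E1_def[abs_def])
qed

lemma E2_d: "(E2 has_derivative blinfun_apply (E3 z)) (at z)"
proof -
  have "((\<lambda>z. \<Sum>k\<in>Basis. g2 ((z - z0) \<bullet> k) *\<^sub>R P2 k) has_derivative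
        (\<lambda>h. \<Sum>k\<in>Basis. (g3 ((z - z0) \<bullet> k) * (h \<bullet> k)) *\<^sub>R P2 k)) (at z)"
    by (intro has_derivative_sum sc_deriv g2_deriv)
  moreover have "(\<lambda>h. \<Sum>k\<in>Basis. (g3 ((z - z0) \<bullet> k) * (h \<bullet> k)) *\<^sub>R P2 k) = blinfun_apply (E3 z)"
    by (auto simp: fun_eq_iff E3_def blinfun.sum_left blinfun.scaleR_left intro!: sum.cong)
  ultimately show ?thesis by (simp add: E2_def[abs_def])
qed

lemma E3_cont: "continuous_on UNIV E3"
  unfolding E3_def[abs_def] g3_def by (intro continuous_intros)

lemma bdd_aux:
  fixes M :: "'a \<Rightarrow> 'b::real_normed_vector"
  assumes "\<And>r. \<bar>g r\<bar> \<le> c"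
  shows "bounded (range (\<lambda>z. \<Sum>k\<in>Basis. g ((z - z0) \<bullet> k) *\<^sub>R M k))"
proof -
  have "norm (\<Sum>k\<in>Basis. g ((z - z0) \<bullet> k) *\<^sub>R M k) \<le> (\<Sum>k\<in>Basis. c * norm (M k))" for z
  proof -
    have "norm (\<Sum>k\<in>Basis. g ((z - z0) \<bullet> k) *\<^sub>R M k) \<le> (\<Sum>k\<in>Basis. norm (g ((z - z0) \<bullet> k) *\<^sub>R M k))"
      by (rule norm_sum)
    also have "\<dots> \<le> (\<Sum>k\<in>Basis. c * norm (M k))"
      by (intro sum_mono) (simp add: assms mult_right_mono)
    finally show ?thesis .
  qed
  thus ?thesis unfolding bounded_iff by blast
qed

lemma E_bdd: "bounded (range E1)" "bounded (range E2)" "bounded (range E3)"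
  unfolding E1_def[abs_def] E2_def[abs_def] E3_def[abs_def]
  by (rule bdd_aux, rule g1_bd) (rule bdd_aux, rule g2_bd, rule bdd_aux, rule g3_bd)

lemma E_at0: "E1 z0 = 0" "E2 z0 = 0"
  by (simp_all add: E1_def E2_def g1_def g2_def)

lemma psi_at0: "psi z0 = 0" by (simp add: psi_def gg_def)
lemma psi_nonneg: "psi z \<ge> 0" unfolding psi_def by (intro sum_nonneg gg_nonneg)

lemma psi_zero: assumes "psi z = 0" "norm (z - z0) < 1" shows "z = z0"
proof -
  have "\<forall>k\<in>Basis. gg ((z - z0) \<bullet> k) = 0"
    using assms(1) unfolding psi_def by (subst (asm) sum_nonneg_eq_0_iff) (auto intro: gg_nonneg)
  moreover have "\<bar>(z - z0) \<bullet> k\<bar> < 1" if "k \<in> Basis" for k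
    using Basis_le_norm[OF that, of "z - z0"] assms(2) by linarith
  ultimately have "\<forall>k\<in>Basis. (z - z0) \<bullet> k = 0" using gg_zero by blast
  hence "z - z0 = 0" by (metis euclidean_all_zero_iff)
  thus ?thesis by simp
qed

end


lemma deriv_formulas:
  fixes \<phi> :: "real \<times> (real^'n) \<Rightarrow> real"
  assumes d1: "\<And>z. (\<phi> has_derivative blinfun_apply (D1 z)) (at z)"
    and d2: "\<And>z. (D1 has_derivative blinfun_apply (D2 z)) (at z)"
  shows "dt \<phi> t x = D1 (t, x) (1, 0)"
    "Dx \<phi> t x = (\<chi> i. D1 (t, x) (0, axis i 1))"
    "D2x \<phi> t x = (\<chi> i j. D2 (t, x) (0, axis i 1) (0, axis j 1))"
proof -
  have fd: "frechet_derivative \<phi> (at w) = blinfun_apply (D1 w)" for w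
    using frechet_derivative_at[OF d1[of w]] by simp
  show "dt \<phi> t x = D1 (t, x) (1, 0)" "Dx \<phi> t x = (\<chi> i. D1 (t, x) (0, axis i 1))"
    by (simp_all add: dt_def Dx_def fd)
  have "((\<lambda>w. blinfun_apply (D1 w) e) has_derivative (\<lambda>h. blinfun_apply (D2 z h) e)) (at z)" for e z
    by (rule has_derivative_eq_rhs, rule blinfun.FDERIV[OF d2 has_derivative_const]) auto
  hence "frechet_derivative (\<lambda>w. blinfun_apply (D1 w) e) (at z) = (\<lambda>h. blinfun_apply (D2 z h) e)" for e z
    using frechet_derivative_at by metis
  thus "D2x \<phi> t x = (\<chi> i j. D2 (t, x) (0, axis i 1) (0, axis j 1))"
    by (simp add: D2x_def fd)
qed

lemma bdd_diff_range:
  fixes f g :: "'a \<Rightarrow> 'b::real_normed_vector"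
  assumes "bounded (range f)" "bounded (range g)"
  shows "bounded (range (\<lambda>z. f z - g z))"
proof -
  obtain B1 B2 where "\<forall>z. norm (f z) \<le> B1" "\<forall>z. norm (g z) \<le> B2"
    using assms unfolding bounded_iff by blast
  hence "\<forall>z. norm (f z - g z) \<le> B1 + B2" by (meson add_mono norm_triangle_ineq4 order.trans)
  thus ?thesis unfolding bounded_iff by blast
qed

lemma C3lb_minus_psi:
  assumes "C3lb \<phi>"
  shows "C3lb (\<lambda>z. \<phi> z - psi z0 z)"
proof -
  obtain D1 D2 D3 where D: "\<forall>z. (\<phi> has_derivative blinfun_apply (D1 z)) (at z)"
     "\<forall>z. (D1 has_derivative blinfun_apply (D2 z)) (at z)"
     "\<forall>z. (D2 has_derivative blinfun_apply (D3 z)) (at z)"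
     "continuous_on UNIV D3" "bounded (range D1)" "bounded (range D2)" "bounded (range D3)"
    using assms unfolding C3lb_def by blast
  have a: "((\<lambda>z. \<phi> z - psi z0 z) has_derivative blinfun_apply (D1 z - E1 z0 z)) (at z)" for z
    using has_derivative_diff[OF D(1)[rule_format, of z] psi_d1[of z0 z]] by (simp add: minus_blinfun.rep_eq fun_diff_def)
  have b: "((\<lambda>z. D1 z - E1 z0 z) has_derivative blinfun_apply (D2 z - E2 z0 z)) (at z)" for z
    using has_derivative_diff[OF D(2)[rule_format, of z] E1_d[of z0 z]] by (simp add: minus_blinfun.rep_eq fun_diff_def)
  have c: "((\<lambda>z. D2 z - E2 z0 z) has_derivative blinfun_apply (D3 z - E3 z0 z)) (at z)" for z
    using has_derivative_diff[OF D(3)[rule_format, of z] E2_d[of z0 z]] by (simp add: minus_blinfun.rep_eq fun_diff_def)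
  have d: "continuous_on UNIV (\<lambda>z. D3 z - E3 z0 z)"
    using D(4) E3_cont by (intro continuous_intros)
  show ?thesis unfolding C3lb_def
    apply (rule exI[of _ "\<lambda>z. D1 z - E1 z0 z"], rule exI[of _ "\<lambda>z. D2 z - E2 z0 z"],
       rule exI[of _ "\<lambda>z. D3 z - E3 z0 z"])
    using a b c d bdd_diff_range[OF D(5) E_bdd(1)] bdd_diff_range[OF D(6) E_bdd(2)] bdd_diff_range[OF D(7) E_bdd(3)]
    by auto
qed



lemma jc_tendsto:
  fixes g :: "real \<Rightarrow> 'a::real_normed_vector \<Rightarrow> 'u::metric_space \<Rightarrow> 'v::metric_space \<Rightarrow> 'b::real_normed_vector"
  assumes gc: "\<forall>x. continuous_on ({0..T} \<times> U \<times> V) (\<lambda>(t, u, v). g t x u v)"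
    and gl: "\<exists>L. \<forall>t\<in>{0..T}. \<forall>u\<in>U. \<forall>v\<in>V. \<forall>x x'. norm (g t x u v - g t x' u v) \<le> L * norm (x - x')"
    and tt: "(t \<longlongrightarrow> t0) F" and xt: "(x \<longlongrightarrow> x0) F" and ut: "(u \<longlongrightarrow> u0) F" and vt: "(v \<longlongrightarrow> v0) F"
    and ev: "eventually (\<lambda>s. t s \<in> {0..T} \<and> u s \<in> U \<and> v s \<in> V) F"
    and p0: "t0 \<in> {0..T}" "u0 \<in> U" "v0 \<in> V"
  shows "((\<lambda>s. g (t s) (x s) (u s) (v s)) \<longlongrightarrow> g t0 x0 u0 v0) F"
proof -
  obtain L where L: "\<forall>t\<in>{0..T}. \<forall>u\<in>U. \<forall>v\<in>V. \<forall>x x'. norm (g t x u v - g t x' u v) \<le> L * norm (x - x')"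
    using gl by blast
  have A: "((\<lambda>s. g (t s) x0 (u s) (v s)) \<longlongrightarrow> g t0 x0 u0 v0) F"
  proof -
    have "((\<lambda>s. (\<lambda>(t, u, v). g t x0 u v) (t s, u s, v s)) \<longlongrightarrow> (\<lambda>(t, u, v). g t x0 u v) (t0, u0, v0)) F"
      by (rule continuous_on_tendsto_compose[OF gc[rule_format, of x0]])
         (use tt ut vt ev p0 in \<open>auto intro!: tendsto_intros elim: eventually_mono\<close>)
    thus ?thesis by simp
  qed
  have B: "((\<lambda>s. g (t s) (x s) (u s) (v s) - g (t s) x0 (u s) (v s)) \<longlongrightarrow> 0) F"
  proof (rule Lim_null_comparison)
    show "\<forall>\<^sub>F s in F. norm (g (t s) (x s) (u s) (v s) - g (t s) x0 (u s) (v s)) \<le> L * norm (x s - x0)"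
      using ev by eventually_elim (use L in auto)
    have "((\<lambda>s. x s - x0) \<longlongrightarrow> 0) F" using xt by (simp add: LIM_zero)
    hence "((\<lambda>s. norm (x s - x0)) \<longlongrightarrow> 0) F" using tendsto_norm_zero by blast
    thus "((\<lambda>s. L * norm (x s - x0)) \<longlongrightarrow> 0) F" using tendsto_mult_right_zero by blast
  qed
  have "((\<lambda>s. (g (t s) (x s) (u s) (v s) - g (t s) x0 (u s) (v s)) + g (t s) x0 (u s) (v s)) \<longlongrightarrow> 0 + g t0 x0 u0 v0) F"
    by (rule tendsto_add[OF B A])
  thus ?thesis by simp
qed



lemma mm_tendsto:
  fixes A :: "'s \<Rightarrow> real^'m^'n" and B :: "'s \<Rightarrow> real^'k^'m"
  assumes "(A \<longlongrightarrow> A0) F" "(B \<longlongrightarrow> B0) F"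
  shows "((\<lambda>s. A s ** B s) \<longlongrightarrow> A0 ** B0) F"
  unfolding matrix_matrix_mult_def using assms by (intro tendsto_intros)

lemma tr_tendsto:
  fixes A :: "'s \<Rightarrow> real^'n^'n"
  assumes "(A \<longlongrightarrow> A0) F"
  shows "((\<lambda>s. trace (A s)) \<longlongrightarrow> trace A0) F"
  unfolding trace_def using assms by (intro tendsto_intros)

lemma transp_tendsto:
  fixes A :: "'s \<Rightarrow> real^'m^'n"
  assumes "(A \<longlongrightarrow> A0) F"
  shows "((\<lambda>s. transpose (A s)) \<longlongrightarrow> transpose A0) F"
  unfolding transpose_def using assms by (intro tendsto_intros)

lemma vm_tendsto:
  fixes A :: "'s \<Rightarrow> real^'m^'n" and q :: "'s \<Rightarrow> real^'n"
  assumes "(q \<longlongrightarrow> q0) F" "(A \<longlongrightarrow> A0) F"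
  shows "((\<lambda>s. q s v* A s) \<longlongrightarrow> q0 v* A0) F"
  unfolding vector_matrix_mult_def using assms by (intro tendsto_intros)

lemma ham_tendsto:
  fixes b :: "real \<Rightarrow> real^'n \<Rightarrow> 'u::metric_space \<Rightarrow> 'v::metric_space \<Rightarrow> real^'n"
    and \<sigma> :: "real \<Rightarrow> real^'n \<Rightarrow> 'u \<Rightarrow> 'v \<Rightarrow> real^'d^'n"
    and f :: "real \<Rightarrow> real^'n \<Rightarrow> real \<Rightarrow> real^'d \<Rightarrow> 'u \<Rightarrow> 'v \<Rightarrow> real"
  assumes b_cont: "\<forall>x. continuous_on ({0..T} \<times> U \<times> V) (\<lambda>(t, u, v). b t x u v)"
    and b_lip: "\<exists>L. \<forall>t\<in>{0..T}. \<forall>u\<in>U. \<forall>v\<in>V. \<forall>x x'.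
                  norm (b t x u v - b t x' u v) \<le> L * norm (x - x')"
    and \<sigma>_cont: "\<forall>x. continuous_on ({0..T} \<times> U \<times> V) (\<lambda>(t, u, v). \<sigma> t x u v)"
    and \<sigma>_lip: "\<exists>L. \<forall>t\<in>{0..T}. \<forall>u\<in>U. \<forall>v\<in>V. \<forall>x x'.
                  norm (\<sigma> t x u v - \<sigma> t x' u v) \<le> L * norm (x - x')"
    and f_cont: "\<forall>x y z. continuous_on ({0..T} \<times> U \<times> V) (\<lambda>(t, u, v). f t x y z u v)"
    and f_lip: "\<exists>L. \<forall>t\<in>{0..T}. \<forall>u\<in>U. \<forall>v\<in>V. \<forall>x y z x' y' z'.
                  \<bar>f t x y z u v - f t x' y' z' u v\<bar>
                    \<le> L * (norm (x - x') + \<bar>y - y'\<bar> + norm (z - z'))"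
    and tt: "(t \<longlongrightarrow> t0) F" and xt: "(x \<longlongrightarrow> x0) F" and yt: "(y \<longlongrightarrow> y0) F"
    and qt: "(q \<longlongrightarrow> q0) F" and Xt: "(X \<longlongrightarrow> X0) F"
    and ut: "(u \<longlongrightarrow> u0) F" and vt: "(v \<longlongrightarrow> v0) F"
    and ev: "eventually (\<lambda>s. t s \<in> {0..T} \<and> u s \<in> U \<and> v s \<in> V) F"
    and p0: "t0 \<in> {0..T}" "u0 \<in> U" "v0 \<in> V"
  shows "((\<lambda>s. ham_int b \<sigma> f (t s) (x s) (y s) (q s) (X s) (u s) (v s))
           \<longlongrightarrow> ham_int b \<sigma> f t0 x0 y0 q0 X0 u0 v0) F"
proof -
  have bt: "((\<lambda>s. b (t s) (x s) (u s) (v s)) \<longlongrightarrow> b t0 x0 u0 v0) F"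
    by (rule jc_tendsto[OF b_cont b_lip tt xt ut vt ev p0])
  have st: "((\<lambda>s. \<sigma> (t s) (x s) (u s) (v s)) \<longlongrightarrow> \<sigma> t0 x0 u0 v0) F"
    by (rule jc_tendsto[OF \<sigma>_cont \<sigma>_lip tt xt ut vt ev p0])
  define g where "g t p u v = f t (fst p) (fst (snd p)) (snd (snd p)) u v" for t p u v
  have gc: "\<forall>p. continuous_on ({0..T} \<times> U \<times> V) (\<lambda>(t, u, v). g t p u v)"
    using f_cont by (simp add: g_def)
  obtain L where L: "\<forall>t\<in>{0..T}. \<forall>u\<in>U. \<forall>v\<in>V. \<forall>x y z x' y' z'.
                  \<bar>f t x y z u v - f t x' y' z' u v\<bar>
                    \<le> L * (norm (x - x') + \<bar>y - y'\<bar> + norm (z - z'))" using f_lip by blast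
  have gl: "\<exists>L. \<forall>t\<in>{0..T}. \<forall>u\<in>U. \<forall>v\<in>V. \<forall>p p'. norm (g t p u v - g t p' u v) \<le> L * norm (p - p')"
  proof (intro exI[of _ "3 * \<bar>L\<bar>"] ballI allI)
    fix t u v and p p' :: "(real^'n) \<times> real \<times> (real^'d)"
    assume "t \<in> {0..T}" "u \<in> U" "v \<in> V"
    hence "norm (g t p u v - g t p' u v) \<le> L * (norm (fst p - fst p') + \<bar>fst (snd p) - fst (snd p')\<bar> + norm (snd (snd p) - snd (snd p')))"
      using L by (simp add: g_def)
    also have "\<dots> \<le> \<bar>L\<bar> * (norm (fst p - fst p') + \<bar>fst (snd p) - fst (snd p')\<bar> + norm (snd (snd p) - snd (snd p')))"
      by (intro mult_right_mono) auto
    also have "\<dots> \<le> \<bar>L\<bar> * (3 * norm (p - p'))"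
    proof (intro mult_left_mono)
      have 1: "norm (fst p - fst p') \<le> norm (p - p')"
        using norm_fst_le[of "fst (p - p')" "snd (p - p')"] unfolding prod.collapse by simp
      have 2: "norm (snd p - snd p') \<le> norm (p - p')"
        using norm_snd_le[of "snd (p - p')" "fst (p - p')"] unfolding prod.collapse by simp
      have 3: "\<bar>fst (snd p) - fst (snd p')\<bar> \<le> norm (snd p - snd p')"
        using norm_fst_le[of "fst (snd p - snd p')" "snd (snd p - snd p')"] unfolding prod.collapse by simp
      have 4: "norm (snd (snd p) - snd (snd p')) \<le> norm (snd p - snd p')"
        using norm_snd_le[of "snd (snd p - snd p')" "fst (snd p - snd p')"] unfolding prod.collapse by simp
      show "norm (fst p - fst p') + \<bar>fst (snd p) - fst (snd p')\<bar> + norm (snd (snd p) - snd (snd p')) \<le> 3 * norm (p - p')"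
        using 1 2 3 4 by linarith
    qed simp
    finally show "norm (g t p u v - g t p' u v) \<le> 3 * \<bar>L\<bar> * norm (p - p')" by simp
  qed
  have zt: "((\<lambda>s. q s v* \<sigma> (t s) (x s) (u s) (v s)) \<longlongrightarrow> q0 v* \<sigma> t0 x0 u0 v0) F"
    by (rule vm_tendsto[OF qt st])
  have pt: "((\<lambda>s. (x s, y s, q s v* \<sigma> (t s) (x s) (u s) (v s))) \<longlongrightarrow> (x0, y0, q0 v* \<sigma> t0 x0 u0 v0)) F"
    using xt yt zt by (intro tendsto_intros)
  have ft: "((\<lambda>s. g (t s) (x s, y s, q s v* \<sigma> (t s) (x s) (u s) (v s)) (u s) (v s))
      \<longlongrightarrow> g t0 (x0, y0, q0 v* \<sigma> t0 x0 u0 v0) u0 v0) F"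
    by (rule jc_tendsto[OF gc gl tt pt ut vt ev p0])
  have trt: "((\<lambda>s. trace (\<sigma> (t s) (x s) (u s) (v s) ** transpose (\<sigma> (t s) (x s) (u s) (v s)) ** X s))
     \<longlongrightarrow> trace (\<sigma> t0 x0 u0 v0 ** transpose (\<sigma> t0 x0 u0 v0) ** X0)) F"
    by (intro tr_tendsto mm_tendsto transp_tendsto st Xt)
  show ?thesis unfolding ham_int_def
    using ft trt bt qt by (intro tendsto_intros) (auto simp: g_def)
qed



lemma supinf_le:
  fixes f g :: "'u \<Rightarrow> 'v \<Rightarrow> real"
  assumes ne: "U \<noteq> {}" "V \<noteq> {}"
    and bf: "\<forall>u\<in>U. \<forall>v\<in>V. \<bar>f u v\<bar> \<le> B" and bg: "\<forall>u\<in>U. \<forall>v\<in>V. \<bar>g u v\<bar> \<le> B"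
    and le: "\<forall>u\<in>U. \<forall>v\<in>V. f u v \<le> g u v + e"
  shows "(SUP u\<in>U. INF v\<in>V. f u v) \<le> (SUP u\<in>U. INF v\<in>V. g u v) + e"
proof -
  have bbf: "bdd_below ((f u) ` V)" if "u \<in> U" for u
    using bf that by (intro bdd_belowI[of _ "-B"]) force
  have bbg: "bdd_below ((g u) ` V)" if "u \<in> U" for u
    using bg that by (intro bdd_belowI[of _ "-B"]) force
  obtain v0 where v0: "v0 \<in> V" using ne by blast
  have ba: "bdd_above ((\<lambda>u. INF v\<in>V. g u v) ` U)"
  proof (intro bdd_aboveI[of _ B])
    fix x assume "x \<in> (\<lambda>u. INF v\<in>V. g u v) ` U"
    then obtain u where u: "u \<in> U" "x = (INF v\<in>V. g u v)" by blast
    have "x \<le> g u v0" using u v0 by (simp add: cINF_lower bbg)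
    also have "\<dots> \<le> B" using bg u v0 by force
    finally show "x \<le> B" .
  qed
  have "(INF v\<in>V. f u v) \<le> (INF v\<in>V. g u v) + e" if u: "u \<in> U" for u
  proof -
    have "(INF v\<in>V. f u v) - e \<le> (INF v\<in>V. g u v)"
    proof (rule cINF_greatest[OF ne(2)])
      fix v assume v: "v \<in> V"
      have "(INF v\<in>V. f u v) \<le> f u v" using v by (simp add: cINF_lower bbf u)
      thus "(INF v\<in>V. f u v) - e \<le> g u v" using le u v by force
    qed
    thus ?thesis by simp
  qed
  also have "(INF v\<in>V. g u v) + e \<le> (SUP u\<in>U. INF v\<in>V. g u v) + e" if "u \<in> U" for u
    using cSUP_upper[OF that ba] by simp
  finally have "\<forall>u\<in>U. (INF v\<in>V. f u v) \<le> (SUP u\<in>U. INF v\<in>V. g u v) + e" by blast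
  thus ?thesis by (intro cSUP_least ne(1)) auto
qed

lemma supinf_tendsto:
  fixes Fh :: "'a::heine_borel \<times> ('u::metric_space \<times> 'v::metric_space) \<Rightarrow> real"
  assumes cont: "continuous_on (S \<times> (U \<times> V)) Fh" and S: "closed S"
    and U: "compact U" "U \<noteq> {}" and V: "compact V" "V \<noteq> {}"
    and a0: "a0 \<in> S" and at: "(a \<longlongrightarrow> a0) F" and ev: "eventually (\<lambda>s. a s \<in> S) F"
  shows "((\<lambda>s. SUP u\<in>U. INF v\<in>V. Fh (a s, (u, v))) \<longlongrightarrow> (SUP u\<in>U. INF v\<in>V. Fh (a0, (u, v)))) F"
proof -
  let ?C = "(S \<inter> cball a0 1) \<times> (U \<times> V)"
  have cC: "compact ?C" using S U V by (intro compact_Times closed_Int_compact) auto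
  have contC: "continuous_on ?C Fh" by (rule continuous_on_subset[OF cont]) auto
  have uc: "uniformly_continuous_on ?C Fh" by (rule compact_uniformly_continuous[OF contC cC])
  have "bounded (Fh ` ?C)" by (intro compact_imp_bounded compact_continuous_image contC cC)
  then obtain B where B: "\<forall>p\<in>?C. \<bar>Fh p\<bar> \<le> B" unfolding bounded_iff by auto
  show ?thesis
  proof (rule tendstoI)
    fix e :: real assume e: "e > 0"
    obtain d where d: "d > 0" "\<forall>x\<in>?C. \<forall>x'\<in>?C. dist x' x < d \<longrightarrow> dist (Fh x') (Fh x) < e/2"
      using uc e unfolding uniformly_continuous_on_def by (meson half_gt_zero)
    have "eventually (\<lambda>s. dist (a s) a0 < min d 1) F"
      using at d(1) by (intro tendstoD) auto
    with ev show "eventually (\<lambda>s. dist (SUP u\<in>U. INF v\<in>V. Fh (a s, (u, v))) (SUP u\<in>U. INF v\<in>V. Fh (a0, (u, v))) < e) F"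
    proof eventually_elim
      case (elim s)
      have inC: "(a s, (u, v)) \<in> ?C" "(a0, (u, v)) \<in> ?C" if "u \<in> U" "v \<in> V" for u v
        using elim a0 that by (auto simp: dist_commute)
      have close: "\<bar>Fh (a s, (u, v)) - Fh (a0, (u, v))\<bar> \<le> e/2" if "u \<in> U" "v \<in> V" for u v
      proof -
        have "dist (a s, (u, v)) (a0, (u, v)) = dist (a s) a0" by (simp add: dist_Pair_Pair)
        hence "dist (Fh (a s, (u, v))) (Fh (a0, (u, v))) < e/2" using d(2) inC[OF that] elim by auto
        thus ?thesis by (simp add: dist_real_def)
      qed
      have bs: "\<forall>u\<in>U. \<forall>v\<in>V. \<bar>Fh (a s, (u, v))\<bar> \<le> B" and b0: "\<forall>u\<in>U. \<forall>v\<in>V. \<bar>Fh (a0, (u, v))\<bar> \<le> B"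
        using inC B by blast+
      have c1: "\<forall>u\<in>U. \<forall>v\<in>V. Fh (a s, (u, v)) \<le> Fh (a0, (u, v)) + e/2"
        using close by (smt (verit))
      have c2: "\<forall>u\<in>U. \<forall>v\<in>V. Fh (a0, (u, v)) \<le> Fh (a s, (u, v)) + e/2"
        using close by (smt (verit))
      have 1: "(SUP u\<in>U. INF v\<in>V. Fh (a s, (u, v))) \<le> (SUP u\<in>U. INF v\<in>V. Fh (a0, (u, v))) + e/2"
        by (rule supinf_le[OF U(2) V(2) bs b0 c1])
      have 2: "(SUP u\<in>U. INF v\<in>V. Fh (a0, (u, v))) \<le> (SUP u\<in>U. INF v\<in>V. Fh (a s, (u, v))) + e/2"
        by (rule supinf_le[OF U(2) V(2) b0 bs c2])
      show ?case using 1 2 e by (simp add: dist_real_def)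
    qed
  qed
qed



context
  fixes T :: real
    and U :: "'u::metric_space set" and V :: "'v::metric_space set"
    and b :: "real \<Rightarrow> real^'n \<Rightarrow> 'u \<Rightarrow> 'v \<Rightarrow> real^'n"
    and \<sigma> :: "real \<Rightarrow> real^'n \<Rightarrow> 'u \<Rightarrow> 'v \<Rightarrow> real^'d^'n"
    and f :: "real \<Rightarrow> real^'n \<Rightarrow> real \<Rightarrow> real^'d \<Rightarrow> 'u \<Rightarrow> 'v \<Rightarrow> real"
  assumes U: "compact U" "U \<noteq> {}"
    and V: "compact V" "V \<noteq> {}"
    and b_cont: "\<forall>x. continuous_on ({0..T} \<times> U \<times> V) (\<lambda>(t, u, v). b t x u v)"
    and b_lip: "\<exists>L. \<forall>t\<in>{0..T}. \<forall>u\<in>U. \<forall>v\<in>V. \<forall>x x'.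
                  norm (b t x u v - b t x' u v) \<le> L * norm (x - x')"
    and \<sigma>_cont: "\<forall>x. continuous_on ({0..T} \<times> U \<times> V) (\<lambda>(t, u, v). \<sigma> t x u v)"
    and \<sigma>_lip: "\<exists>L. \<forall>t\<in>{0..T}. \<forall>u\<in>U. \<forall>v\<in>V. \<forall>x x'.
                  norm (\<sigma> t x u v - \<sigma> t x' u v) \<le> L * norm (x - x')"
    and f_cont: "\<forall>x y z. continuous_on ({0..T} \<times> U \<times> V) (\<lambda>(t, u, v). f t x y z u v)"
    and f_lip: "\<exists>L. \<forall>t\<in>{0..T}. \<forall>u\<in>U. \<forall>v\<in>V. \<forall>x y z x' y' z'.
                  \<bar>f t x y z u v - f t x' y' z' u v\<bar>
                    \<le> L * (norm (x - x') + \<bar>y - y'\<bar> + norm (z - z'))"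
begin

definition Fh :: "(real \<times> (real^'n) \<times> real \<times> (real^'n) \<times> (real^'n^'n)) \<times> ('u \<times> 'v) \<Rightarrow> real" where
  "Fh p = ham_int b \<sigma> f (fst (fst p)) (fst (snd (fst p))) (fst (snd (snd (fst p))))
            (fst (snd (snd (snd (fst p))))) (snd (snd (snd (snd (fst p))))) (fst (snd p)) (snd (snd p))"

lemma Fh_cont: "continuous_on (({0..T} \<times> UNIV) \<times> (U \<times> V)) Fh"
  unfolding continuous_on_def
proof
  fix p :: "(real \<times> (real^'n) \<times> real \<times> (real^'n) \<times> (real^'n^'n)) \<times> ('u \<times> 'v)"
  assume p: "p \<in> ({0..T} \<times> UNIV) \<times> (U \<times> V)"
  let ?F = "at p within ({0..T} \<times> UNIV) \<times> (U \<times> V)"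
  have id: "((\<lambda>s. s) \<longlongrightarrow> p) ?F" by (rule tendsto_ident_at)
  have ev: "eventually (\<lambda>s. s \<in> ({0..T} \<times> UNIV) \<times> (U \<times> V)) ?F"
    unfolding eventually_at_filter by simp
  show "(Fh \<longlongrightarrow> Fh p) ?F"
    unfolding Fh_def
    by (rule ham_tendsto[OF b_cont b_lip \<sigma>_cont \<sigma>_lip f_cont f_lip])
       (use id ev p in \<open>auto intro!: tendsto_intros elim!: eventually_mono\<close>)
qed

lemma Hm_tendsto:
  assumes at: "((\<lambda>s. (t s, x s, y s, q s, X s)) \<longlongrightarrow> (t0, x0, y0, q0, X0)) F"
    and ev: "eventually (\<lambda>s. t s \<in> {0..T}) F" and t0: "t0 \<in> {0..T}"
  shows "((\<lambda>s. Hminus U V b \<sigma> f (t s) (x s) (y s) (q s) (X s)) \<longlongrightarrow> Hminus U V b \<sigma> f t0 x0 y0 q0 X0) F"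
proof -
  have "((\<lambda>s. SUP u\<in>U. INF v\<in>V. Fh ((t s, x s, y s, q s, X s), (u, v))) \<longlongrightarrow>
         (SUP u\<in>U. INF v\<in>V. Fh ((t0, x0, y0, q0, X0), (u, v)))) F"
    by (rule supinf_tendsto[OF Fh_cont _ U V _ at]) (use ev t0 in \<open>auto intro: closed_Times elim!: eventually_mono\<close>)
  thus ?thesis by (simp add: Hminus_def Fh_def)
qed

lemma ham_bdd:
  assumes "t \<in> {0..T}"
  shows "\<exists>B. \<forall>u\<in>U. \<forall>v\<in>V. \<bar>ham_int b \<sigma> f t x y q X u v\<bar> \<le> B"
proof -
  have "continuous_on ({(t, x, y, q, X)} \<times> (U \<times> V)) Fh"
    by (rule continuous_on_subset[OF Fh_cont]) (use assms in auto)
  hence "compact (Fh ` ({(t, x, y, q, X)} \<times> (U \<times> V)))"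
    using U V by (intro compact_continuous_image compact_Times) auto
  hence "bounded (Fh ` ({(t, x, y, q, X)} \<times> (U \<times> V)))" by (rule compact_imp_bounded)
  then obtain B where "\<forall>z\<in>Fh ` ({(t, x, y, q, X)} \<times> (U \<times> V)). norm z \<le> B"
    unfolding bounded_iff by blast
  thus ?thesis by (auto simp: Fh_def)
qed

lemma Hpen_ge:
  assumes "t \<in> {0..T}"
  shows "Hminus U V b \<sigma> f t x y q X + real m * max 0 (h t x - y) \<le> Hpen U V b \<sigma> f h m t x y q X"
proof -
  let ?c = "real m * max 0 (h t x - y)"
  obtain B where B: "\<forall>u\<in>U. \<forall>v\<in>V. \<bar>ham_int b \<sigma> f t x y q X u v\<bar> \<le> B"
    using ham_bdd[OF assms] by blast
  have B2: "\<forall>u\<in>U. \<forall>v\<in>V. \<bar>ham_int b \<sigma> f t x y q X u v + ?c\<bar> \<le> B + \<bar>?c\<bar>"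
    using B by (smt (verit))
  have B1: "\<forall>u\<in>U. \<forall>v\<in>V. \<bar>ham_int b \<sigma> f t x y q X u v\<bar> \<le> B + \<bar>?c\<bar>"
    using B by (smt (verit))
  have "(SUP u\<in>U. INF v\<in>V. ham_int b \<sigma> f t x y q X u v) \<le>
        (SUP u\<in>U. INF v\<in>V. ham_int b \<sigma> f t x y q X u v + ?c) + - ?c"
    by (rule supinf_le[OF U(2) V(2) B1 B2]) simp
  thus ?thesis by (simp add: Hminus_def Hpen_def)
qed

end


lemma h_tendsto:
  fixes h :: "real \<Rightarrow> 'a::real_normed_vector \<Rightarrow> real"
  assumes h_cont: "\<forall>x. continuous_on {0..T} (\<lambda>t. h t x)"
    and h_lip: "\<exists>L. \<forall>t\<in>{0..T}. \<forall>x x'. \<bar>h t x - h t x'\<bar> \<le> L * norm (x - x')"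
    and tt: "(t \<longlongrightarrow> t0) F" and xt: "(x \<longlongrightarrow> x0) F"
    and ev: "eventually (\<lambda>s. t s \<in> {0..T}) F" and t0: "t0 \<in> {0..T}"
  shows "((\<lambda>s. h (t s) (x s)) \<longlongrightarrow> h t0 x0) F"
proof -
  obtain L where L: "\<forall>t\<in>{0..T}. \<forall>x x'. \<bar>h t x - h t x'\<bar> \<le> L * norm (x - x')"
    using h_lip by blast
  have A: "((\<lambda>s. h (t s) x0) \<longlongrightarrow> h t0 x0) F"
    by (rule continuous_on_tendsto_compose[OF h_cont[rule_format, of x0] tt t0 ev])
  have B: "((\<lambda>s. h (t s) (x s) - h (t s) x0) \<longlongrightarrow> 0) F"
  proof (rule Lim_null_comparison)
    show "\<forall>\<^sub>F s in F. norm (h (t s) (x s) - h (t s) x0) \<le> L * norm (x s - x0)"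
      using ev by eventually_elim (use L in auto)
    have "((\<lambda>s. x s - x0) \<longlongrightarrow> 0) F" using xt by (simp add: LIM_zero)
    hence "((\<lambda>s. norm (x s - x0)) \<longlongrightarrow> 0) F" using tendsto_norm_zero by blast
    thus "((\<lambda>s. L * norm (x s - x0)) \<longlongrightarrow> 0) F" using tendsto_mult_right_zero by blast
  qed
  have "((\<lambda>s. (h (t s) (x s) - h (t s) x0) + h (t s) x0) \<longlongrightarrow> 0 + h t0 x0) F"
    by (rule tendsto_add[OF B A])
  thus ?thesis by simp
qed

theorem proposition4p1:
  fixes T :: real
    and U :: "'u::metric_space set" and V :: "'v::metric_space set"
    and b :: "real \<Rightarrow> real^'n \<Rightarrow> 'u \<Rightarrow> 'v \<Rightarrow> real^'n"
    and \<sigma> :: "real \<Rightarrow> real^'n \<Rightarrow> 'u \<Rightarrow> 'v \<Rightarrow> real^'d^'n"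
    and f :: "real \<Rightarrow> real^'n \<Rightarrow> real \<Rightarrow> real^'d \<Rightarrow> 'u \<Rightarrow> 'v \<Rightarrow> real"
    and \<Phi> :: "real^'n \<Rightarrow> real"
    and h :: "real \<Rightarrow> real^'n \<Rightarrow> real"
    and W :: "nat \<Rightarrow> real \<Rightarrow> real^'n \<Rightarrow> real"
    and Wt :: "real \<Rightarrow> real^'n \<Rightarrow> real"
  assumes T_pos: "T > 0"
    and U: "compact U" "U \<noteq> {}"
    and V: "compact V" "V \<noteq> {}"
    \<comment> \<open>(H3.1)\<close>
    and b_cont: "\<forall>x. continuous_on ({0..T} \<times> U \<times> V) (\<lambda>(t, u, v). b t x u v)"
    and b_lip: "\<exists>L. \<forall>t\<in>{0..T}. \<forall>u\<in>U. \<forall>v\<in>V. \<forall>x x'.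
                  norm (b t x u v - b t x' u v) \<le> L * norm (x - x')"
    and \<sigma>_cont: "\<forall>x. continuous_on ({0..T} \<times> U \<times> V) (\<lambda>(t, u, v). \<sigma> t x u v)"
    and \<sigma>_lip: "\<exists>L. \<forall>t\<in>{0..T}. \<forall>u\<in>U. \<forall>v\<in>V. \<forall>x x'.
                  norm (\<sigma> t x u v - \<sigma> t x' u v) \<le> L * norm (x - x')"
    \<comment> \<open>(H3.2)\<close>
    and f_cont: "\<forall>x y z. continuous_on ({0..T} \<times> U \<times> V) (\<lambda>(t, u, v). f t x y z u v)"
    and f_lip: "\<exists>L. \<forall>t\<in>{0..T}. \<forall>u\<in>U. \<forall>v\<in>V. \<forall>x y z x' y' z'.
                  \<bar>f t x y z u v - f t x' y' z' u v\<bar>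
                    \<le> L * (norm (x - x') + \<bar>y - y'\<bar> + norm (z - z'))"
    and \<Phi>_lip: "\<exists>L. \<forall>x x'. \<bar>\<Phi> x - \<Phi> x'\<bar> \<le> L * norm (x - x')"
    and h_cont: "\<forall>x. continuous_on {0..T} (\<lambda>t. h t x)"
    and h_lip: "\<exists>L. \<forall>t\<in>{0..T}. \<forall>x x'. \<bar>h t x - h t x'\<bar> \<le> L * norm (x - x')"
    and h_T: "\<forall>x. h T x \<le> \<Phi> x"
    \<comment> \<open>properties of W_m = essinf_beta esssup_u mY_t (stated in the paper)\<close>
    and W_cont: "\<forall>m\<ge>1. continuous_on ({0..T} \<times> UNIV) (\<lambda>(t, x). W m t x)"
    and W_lin: "\<forall>m\<ge>1. \<exists>C. \<forall>t\<in>{0..T}. \<forall>x. \<bar>W m t x\<bar> \<le> C * (1 + norm x)"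
    and W_mono: "\<forall>m\<ge>1. \<forall>t\<in>{0..T}. \<forall>x. W m t x \<le> W (Suc m) t x"
    and W_visc: "\<forall>m\<ge>1. visc_sol_pen T U V b \<sigma> f h \<Phi> m (W m)"
    and W_bdd: "\<exists>C. \<forall>m\<ge>1. \<forall>t\<in>{0..T}. \<forall>x. W m t x \<le> C * (1 + norm x)"
    and Wt_lim: "\<forall>t\<in>{0..T}. \<forall>x. (\<lambda>m. W m t x) \<longlonglongrightarrow> Wt t x"
  shows "visc_super_obst T U V b \<sigma> f h \<Phi> Wt"
proof -
  have Wmono: "W m t x \<le> W k t x" if "1 \<le> m" "m \<le> k" "t \<in> {0..T}" for m k t x
    using that(2)
  proof (induction k rule: dec_induct)
    case (step n)
    thus ?case using W_mono that by (meson order.trans)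
  qed simp
  have Wle: "W m t x \<le> Wt t x" if "1 \<le> m" "t \<in> {0..T}" for m t x
    by (rule LIMSEQ_le_const[OF Wt_lim[rule_format, OF that(2), of x]]) (use Wmono that in blast)
  have Wapprox: "\<exists>m\<ge>1. Wt t x - e < W m t x" if "t \<in> {0..T}" "e > 0" for t x e
  proof -
    have "eventually (\<lambda>m. dist (W m t x) (Wt t x) < e) sequentially"
      using tendstoD[OF Wt_lim[rule_format, OF that(1), of x] that(2)] .
    then obtain N where N: "\<forall>m\<ge>N. dist (W m t x) (Wt t x) < e" unfolding eventually_sequentially by blast
    show ?thesis using N[rule_format, of "max N 1"] by (intro exI[of _ "max N 1"]) (auto simp: dist_real_def)
  qed
  have Wc: "continuous_on ({0..T} \<times> UNIV) (\<lambda>p. W m (fst p) (snd p))" if "1 \<le> m" for m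
    using W_cont that by (simp add: case_prod_beta)
  have lsc: "lsc_on T Wt" unfolding lsc_on_def
  proof (intro ballI allI impI)
    fix t x and e :: real assume t: "t \<in> {0..T}" and e: "e > 0"
    obtain m where m: "m \<ge> 1" "Wt t x - e/2 < W m t x" using Wapprox[OF t, of "e/2" x] e by auto
    obtain d where d: "d > 0" "\<forall>p\<in>{0..T} \<times> UNIV. dist p (t, x) < d \<longrightarrow> dist (W m (fst p) (snd p)) (W m t x) < e/2"
      using Wc[OF m(1)] t e unfolding continuous_on_iff
      by (metis UNIV_I fst_conv half_gt_zero mem_Times_iff snd_conv)
    show "\<exists>\<delta>>0. \<forall>s y. s \<in> {0..T} \<and> dist (s, y) (t, x) < \<delta> \<longrightarrow> Wt t x - e < Wt s y"
    proof (intro exI[of _ d] conjI allI impI)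
      fix s y assume sy: "s \<in> {0..T} \<and> dist (s, y) (t, x) < d"
      hence "dist (W m s y) (W m t x) < e/2" using d(2) by force
      moreover have "W m s y \<le> Wt s y" using Wle m(1) sy by blast
      ultimately show "Wt t x - e < Wt s y" using m(2) unfolding dist_real_def abs_less_iff by linarith
    qed (rule d(1))
  qed
  have termc: "\<forall>x. Wt T x \<ge> \<Phi> x"
  proof
    fix x
    have "W m T x = \<Phi> x" if "m \<ge> 1" for m
      using W_visc that unfolding visc_sol_pen_def by blast
    moreover have "T \<in> {0..T}" using T_pos by simp
    ultimately show "Wt T x \<ge> \<Phi> x"
      using LIMSEQ_le_const[OF Wt_lim[rule_format, of T x], of "\<Phi> x"] by force
  qed
  have main: "min (Wt t0 x0 - h t0 x0)
            (- dt \<phi> t0 x0 - Hminus U V b \<sigma> f t0 x0 (Wt t0 x0) (Dx \<phi> t0 x0) (D2x \<phi> t0 x0)) \<ge> 0"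
    if A: "C3lb \<phi>" "0 \<le> t0" "t0 < T" "loc_min T Wt \<phi> t0 x0" for \<phi> t0 x0
  proof -
    define z0 where "z0 = (t0, x0)"
    have t0T: "t0 \<in> {0..T}" using A by auto
    obtain \<delta>0 where \<delta>0: "\<delta>0 > 0" "\<forall>s y. s \<in> {0..T} \<and> dist (s, y) (t0, x0) < \<delta>0 \<longrightarrow>
       Wt s y - \<phi> (s, y) \<ge> Wt t0 x0 - \<phi> (t0, x0)"
      using A(4) unfolding loc_min_def by blast
    define \<phi>' where "\<phi>' = (\<lambda>z. \<phi> z - psi z0 z)"
    obtain D1 D2 D3 where D: "\<forall>z. (\<phi> has_derivative blinfun_apply (D1 z)) (at z)"
       "\<forall>z. (D1 has_derivative blinfun_apply (D2 z)) (at z)"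
       "\<forall>z. (D2 has_derivative blinfun_apply (D3 z)) (at z)"
      using A(1) unfolding C3lb_def by blast
    define D1' where "D1' z = D1 z - E1 z0 z" for z
    define D2' where "D2' z = D2 z - E2 z0 z" for z
    have d1': "(\<phi>' has_derivative blinfun_apply (D1' z)) (at z)" for z
      using has_derivative_diff[OF D(1)[rule_format, of z] psi_d1[of z0 z]]
      by (simp add: minus_blinfun.rep_eq fun_diff_def \<phi>'_def D1'_def)
    have d2': "(D1' has_derivative blinfun_apply (D2' z)) (at z)" for z
      using has_derivative_diff[OF D(2)[rule_format, of z] E1_d[of z0 z]]
      by (simp add: minus_blinfun.rep_eq fun_diff_def D1'_def[abs_def] D2'_def)
    have C': "C3lb \<phi>'" unfolding \<phi>'_def by (rule C3lb_minus_psi[OF A(1)])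
    have frm: "dt \<phi>' t x = D1' (t, x) (1, 0)" "Dx \<phi>' t x = (\<chi> i. D1' (t, x) (0, axis i 1))"
      "D2x \<phi>' t x = (\<chi> i j. D2' (t, x) (0, axis i 1) (0, axis j 1))" for t x
      by (rule deriv_formulas[OF d1' d2'])+
    have frm0: "dt \<phi> t x = D1 (t, x) (1, 0)" "Dx \<phi> t x = (\<chi> i. D1 (t, x) (0, axis i 1))"
      "D2x \<phi> t x = (\<chi> i j. D2 (t, x) (0, axis i 1) (0, axis j 1))" for t x
      by (rule deriv_formulas[OF D(1)[rule_format] D(2)[rule_format]])+
    have D1'0: "D1' z0 = D1 z0" and D2'0: "D2' z0 = D2 z0"
      by (simp_all add: D1'_def D2'_def E_at0)
    have \<phi>'c: "continuous_on UNIV \<phi>'"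
      using d1' by (meson continuous_at_imp_continuous_on has_derivative_continuous)
    have D1'c: "isCont D1' z" for z using d2' by (rule has_derivative_continuous)
    have D2'c: "isCont D2' z" for z
    proof -
      have "isCont D2 z" using D(3) using has_derivative_continuous by blast
      moreover have "isCont (E2 z0) z" using E2_d[of z0 z] has_derivative_continuous by blast
      ultimately show ?thesis unfolding D2'_def[abs_def] by (intro continuous_intros)
    qed
    have psi0: "psi z0 z0 = 0" by (rule psi_at0)
    have \<phi>'z0: "\<phi>' z0 = \<phi> z0" by (simp add: \<phi>'_def psi0)
    define r where "r = min (\<delta>0/2) (1/2)"
    have r: "r > 0" "r < \<delta>0" "r < 1" using \<delta>0 by (auto simp: r_def)
    define K where "K = ({0..T} \<times> UNIV) \<inter> cball z0 r"
    have Kc: "compact K" unfolding K_def by (intro closed_Int_compact closed_Times) auto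
    have z0K: "z0 \<in> K" using t0T r by (simp add: K_def z0_def)
    have exmin: "\<exists>p\<in>K. \<forall>q\<in>K. W m (fst p) (snd p) - \<phi>' p \<le> W m (fst q) (snd q) - \<phi>' q" if "1 \<le> m" for m
    proof (rule continuous_attains_inf[OF Kc])
      show "K \<noteq> {}" using z0K by blast
      show "continuous_on K (\<lambda>p. W m (fst p) (snd p) - \<phi>' p)"
        by (intro continuous_intros continuous_on_subset[OF Wc[OF that]] continuous_on_subset[OF \<phi>'c])
           (auto simp: K_def)
    qed
    define zz where "zz n = (SOME p. p \<in> K \<and> (\<forall>q\<in>K. W (Suc n) (fst p) (snd p) - \<phi>' p \<le> W (Suc n) (fst q) (snd q) - \<phi>' q))" for n
    have zz: "zz n \<in> K \<and> (\<forall>q\<in>K. W (Suc n) (fst (zz n)) (snd (zz n)) - \<phi>' (zz n) \<le> W (Suc n) (fst q) (snd q) - \<phi>' q)" for n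
    proof -
      have "(1::nat) \<le> Suc n" by simp
      from exmin[OF this] show ?thesis unfolding zz_def by (rule someI_ex[OF bexE]) blast
    qed
    obtain l rr where l: "l \<in> K" "strict_mono rr" "(zz \<circ> rr) \<longlonglongrightarrow> l"
      using compact_imp_seq_compact[OF Kc] zz unfolding seq_compact_def by meson
    define M where "M j = Suc (rr j)" for j
    define p where "p j = zz (rr j)" for j
    have pK: "p j \<in> K" for j using zz by (simp add: p_def)
    have pmin: "\<forall>q\<in>K. W (M j) (fst (p j)) (snd (p j)) - \<phi>' (p j) \<le> W (M j) (fst q) (snd q) - \<phi>' q" for j
      using zz by (simp add: p_def M_def)
    have pl: "p \<longlonglongrightarrow> l" using l(3) by (simp add: p_def[abs_def] o_def)
    have Mge: "M j \<ge> Suc j" for j using seq_suble[OF l(2)] by (simp add: M_def)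
    have pT: "fst (p j) \<in> {0..T}" for j using pK[of j] unfolding K_def by (auto simp: mem_Times_iff)
    have lT: "fst l \<in> {0..T}" using l(1) unfolding K_def by (auto simp: mem_Times_iff)
    have bound1: "W (M j) (fst (p j)) (snd (p j)) - \<phi>' (p j) \<le> Wt t0 x0 - \<phi> (t0, x0)" for j
    proof -
      have "W (M j) (fst (p j)) (snd (p j)) - \<phi>' (p j) \<le> W (M j) t0 x0 - \<phi>' z0"
        using pmin[of j] z0K by (auto simp: z0_def)
      also have "\<dots> \<le> Wt t0 x0 - \<phi> (t0, x0)" using Wle[of "M j" t0 x0] t0T \<phi>'z0 by (simp add: M_def z0_def)
      finally show ?thesis .
    qed
    have lz0: "l = z0"
    proof -
      have step: "W k (fst l) (snd l) - \<phi>' l \<le> Wt t0 x0 - \<phi> (t0, x0)" if k: "1 \<le> k" for k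
      proof -
        have c: "continuous_on ({0..T} \<times> UNIV) (\<lambda>q. W k (fst q) (snd q) - \<phi>' q)"
          by (intro continuous_intros Wc[OF k] continuous_on_subset[OF \<phi>'c]) auto
        have tend: "(\<lambda>j. W k (fst (p j)) (snd (p j)) - \<phi>' (p j)) \<longlonglongrightarrow> W k (fst l) (snd l) - \<phi>' l"
          by (rule continuous_on_tendsto_compose[OF c pl, simplified])
             (use lT pT in \<open>auto simp: mem_Times_iff\<close>)
        show ?thesis
        proof (rule LIMSEQ_le_const2[OF tend], intro exI allI impI)
          fix j assume "j \<ge> k"
          hence "k \<le> M j" using Mge[of j] by linarith
          hence "W k (fst (p j)) (snd (p j)) \<le> W (M j) (fst (p j)) (snd (p j))" using Wmono k pT by blast
          thus "W k (fst (p j)) (snd (p j)) - \<phi>' (p j) \<le> Wt t0 x0 - \<phi> (t0, x0)" using bound1[of j] by linarith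
        qed
      qed
      have tl: "(\<lambda>k. W k (fst l) (snd l) - \<phi>' l) \<longlonglongrightarrow> Wt (fst l) (snd l) - \<phi>' l"
        using Wt_lim lT by (intro tendsto_intros) auto
      have le1: "Wt (fst l) (snd l) - \<phi>' l \<le> Wt t0 x0 - \<phi> (t0, x0)"
        by (rule LIMSEQ_le_const2[OF tl]) (use step in auto)
      have dl: "dist l z0 \<le> r" using l(1) by (auto simp: K_def dist_commute)
      have le2: "Wt (fst l) (snd l) - \<phi> (fst l, snd l) \<ge> Wt t0 x0 - \<phi> (t0, x0)"
        using \<delta>0(2)[rule_format, of "fst l" "snd l"] lT dl r by (simp add: z0_def)
      have "psi z0 l \<le> 0" using le1 le2 by (simp add: \<phi>'_def)
      hence "psi z0 l = 0" using psi_nonneg[of z0 l] by linarith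
      moreover have "norm (l - z0) < 1" using dl r by (simp add: dist_norm)
      ultimately show ?thesis by (rule psi_zero)
    qed
    have pz0: "p \<longlonglongrightarrow> z0" using pl lz0 by simp
    have \<phi>'T: "(\<lambda>j. \<phi>' (p j)) \<longlonglongrightarrow> \<phi>' z0"
      by (rule continuous_on_tendsto_compose[OF \<phi>'c pz0]) auto
    have Wconv: "(\<lambda>j. W (M j) (fst (p j)) (snd (p j))) \<longlonglongrightarrow> Wt t0 x0"
    proof (rule tendstoI)
      fix e :: real assume e: "e > 0"
      obtain k where k: "k \<ge> 1" "Wt t0 x0 - e/2 < W k t0 x0" using Wapprox[OF t0T, of "e/2" x0] e by auto
      have Wk: "(\<lambda>j. W k (fst (p j)) (snd (p j))) \<longlonglongrightarrow> W k t0 x0"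
        using continuous_on_tendsto_compose[OF Wc[OF k(1)] pz0] t0T pT by (auto simp: z0_def mem_Times_iff)
      have ev1: "eventually (\<lambda>j. \<phi>' (p j) < \<phi>' z0 + e) sequentially"
        using tendstoD[OF \<phi>'T e] by eventually_elim (auto simp: dist_real_def abs_less_iff)
      have e2: "e/2 > 0" using e by simp
      have ev2: "eventually (\<lambda>j. W k t0 x0 - e/2 < W k (fst (p j)) (snd (p j))) sequentially"
        using tendstoD[OF Wk e2] by eventually_elim (unfold dist_real_def abs_less_iff, linarith)
      have ev3: "eventually (\<lambda>j. k \<le> M j) sequentially"
        using eventually_ge_at_top[of k] by eventually_elim (use Mge in \<open>metis le_SucI order.trans\<close>)
      show "eventually (\<lambda>j. dist (W (M j) (fst (p j)) (snd (p j))) (Wt t0 x0) < e) sequentially"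
        using ev1 ev2 ev3
      proof eventually_elim
        case (elim j)
        have up: "W (M j) (fst (p j)) (snd (p j)) < Wt t0 x0 + e"
          using bound1[of j] elim(1) \<phi>'z0 by (simp add: z0_def)
        have "W k (fst (p j)) (snd (p j)) \<le> W (M j) (fst (p j)) (snd (p j))"
          using Wmono k(1) elim(3) pT by blast
        hence lo: "Wt t0 x0 - e < W (M j) (fst (p j)) (snd (p j))" using elim(2) k(2) by linarith
        show ?case using up lo by (simp add: dist_real_def abs_less_iff)
      qed
    qed
    let ?t = "\<lambda>j. fst (p j)" and ?x = "\<lambda>j. snd (p j)"
    let ?W = "\<lambda>j. W (M j) (fst (p j)) (snd (p j))"
    let ?Hj = "\<lambda>j. Hminus U V b \<sigma> f (?t j) (?x j) (?W j) (Dx \<phi>' (?t j) (?x j)) (D2x \<phi>' (?t j) (?x j))"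
    let ?H0 = "Hminus U V b \<sigma> f t0 x0 (Wt t0 x0) (Dx \<phi> t0 x0) (D2x \<phi> t0 x0)"
    have ev_r: "eventually (\<lambda>j. dist (p j) z0 < r) sequentially" using tendstoD[OF pz0 r(1)] .
    have ptT: "?t \<longlonglongrightarrow> t0" using tendsto_fst[OF pz0] by (simp add: z0_def)
    have pxT: "?x \<longlonglongrightarrow> x0" using tendsto_snd[OF pz0] by (simp add: z0_def)
    have ev_T: "eventually (\<lambda>j. ?t j < T) sequentially"
    proof -
      have "T - t0 > 0" using A(3) by simp
      from tendstoD[OF ptT this] show ?thesis
        by eventually_elim (unfold dist_real_def abs_less_iff, linarith)
    qed
    have ineq: "eventually (\<lambda>j. ?Hj j + real (M j) * max 0 (h (?t j) (?x j) - ?W j) \<le> - dt \<phi>' (?t j) (?x j)) sequentially"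
      using ev_r ev_T
    proof eventually_elim
      case (elim j)
      have pj: "p j = (?t j, ?x j)" by simp
      have lm: "loc_min T (W (M j)) \<phi>' (?t j) (?x j)"
        unfolding loc_min_def
      proof (intro exI[of _ "r - dist (p j) z0"] conjI allI impI)
        show "r - dist (p j) z0 > 0" using elim by simp
        fix s y assume sy: "s \<in> {0..T} \<and> dist (s, y) (?t j, ?x j) < r - dist (p j) z0"
        have "dist (s, y) z0 \<le> dist (s, y) (p j) + dist (p j) z0" by (rule dist_triangle)
        hence "(s, y) \<in> K" using sy by (auto simp: K_def dist_commute)
        thus "W (M j) s y - \<phi>' (s, y) \<ge> W (M j) (?t j) (?x j) - \<phi>' (?t j, ?x j)"
          using pmin[of j] by force
      qed
      have M1: "M j \<ge> 1" using Mge[of j] by simp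
      have visc: "- dt \<phi>' (?t j) (?x j) - Hpen U V b \<sigma> f h (M j) (?t j) (?x j) (?W j) (Dx \<phi>' (?t j) (?x j)) (D2x \<phi>' (?t j) (?x j)) \<ge> 0"
        using W_visc[rule_format, OF M1] C' lm pT[of j] elim(2) unfolding visc_sol_pen_def by auto
      have "?Hj j + real (M j) * max 0 (h (?t j) (?x j) - ?W j) \<le> Hpen U V b \<sigma> f h (M j) (?t j) (?x j) (?W j) (Dx \<phi>' (?t j) (?x j)) (D2x \<phi>' (?t j) (?x j))"
        by (rule Hpen_ge[OF U V b_cont b_lip \<sigma>_cont \<sigma>_lip f_cont f_lip pT])
      thus ?case using visc by linarith
    qed
    have D1T: "(\<lambda>j. D1' (p j)) \<longlonglongrightarrow> D1 (t0, x0)"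
      using isCont_tendsto_compose[OF D1'c pz0] D1'0 by (simp add: z0_def)
    have D2T: "(\<lambda>j. D2' (p j)) \<longlonglongrightarrow> D2 (t0, x0)"
      using isCont_tendsto_compose[OF D2'c pz0] D2'0 by (simp add: z0_def)
    have dtT: "(\<lambda>j. dt \<phi>' (?t j) (?x j)) \<longlonglongrightarrow> dt \<phi> t0 x0"
      using blinfun.tendsto[OF D1T tendsto_const[of "(1, 0)"]] by (simp add: frm frm0)
    have DxT: "(\<lambda>j. Dx \<phi>' (?t j) (?x j)) \<longlonglongrightarrow> Dx \<phi> t0 x0"
      unfolding frm frm0 prod.collapse
      by (intro tendsto_vec_lambda blinfun.tendsto[OF D1T tendsto_const])
    have D2xT: "(\<lambda>j. D2x \<phi>' (?t j) (?x j)) \<longlonglongrightarrow> D2x \<phi> t0 x0"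
      unfolding frm frm0 prod.collapse
      by (intro tendsto_vec_lambda blinfun.tendsto[OF blinfun.tendsto[OF D2T tendsto_const] tendsto_const])
    have HT: "?Hj \<longlonglongrightarrow> ?H0"
      by (rule Hm_tendsto[OF U V b_cont b_lip \<sigma>_cont \<sigma>_lip f_cont f_lip _ _ t0T])
         (use ptT pxT Wconv DxT D2xT pT in \<open>auto intro!: tendsto_intros\<close>)
    have cT: "(\<lambda>j. - dt \<phi>' (?t j) (?x j) - ?Hj j) \<longlonglongrightarrow> - dt \<phi> t0 x0 - ?H0"
      using dtT HT by (intro tendsto_intros)
    have part2: "?H0 \<le> - dt \<phi> t0 x0"
    proof (rule tendsto_le[OF trivial_limit_sequentially tendsto_minus[OF dtT] HT])
      show "eventually (\<lambda>j. ?Hj j \<le> - dt \<phi>' (?t j) (?x j)) sequentially"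
        using ineq by eventually_elim (smt (verit, ccfv_SIG) max.cobounded1 of_nat_0_le_iff zero_le_mult_iff)
    qed
    have part1: "h t0 x0 \<le> Wt t0 x0"
    proof (rule ccontr)
      assume nh: "\<not> h t0 x0 \<le> Wt t0 x0"
      define d where "d = h t0 x0 - Wt t0 x0"
      have d: "d > 0" "d/2 > 0" using nh by (auto simp: d_def)
      define c0 where "c0 = - dt \<phi> t0 x0 - ?H0"
      have hT: "(\<lambda>j. h (?t j) (?x j) - ?W j) \<longlonglongrightarrow> d"
        unfolding d_def by (intro tendsto_diff h_tendsto[OF h_cont h_lip ptT pxT _ t0T] Wconv) (use pT in auto)
      have ev_h: "eventually (\<lambda>j. d/2 < h (?t j) (?x j) - ?W j) sequentially"
        using tendstoD[OF hT d(2)] by eventually_elim (unfold dist_real_def abs_less_iff, linarith)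
      have ev_c: "eventually (\<lambda>j. - dt \<phi>' (?t j) (?x j) - ?Hj j < c0 + 1) sequentially"
        using tendstoD[OF cT zero_less_one] unfolding c0_def
        by eventually_elim (unfold dist_real_def abs_less_iff, linarith)
      have ev_M: "eventually (\<lambda>j. 2 * (c0 + 1) / d < real (M j)) sequentially"
        using eventually_ge_at_top[of "nat \<lceil>2 * (c0 + 1) / d\<rceil>"]
      proof eventually_elim
        case (elim j)
        have "2 * (c0 + 1) / d \<le> real j" using elim by linarith
        also have "\<dots> < real (M j)" using Mge[of j] by simp
        finally show ?case .
      qed
      have "eventually (\<lambda>j. False) sequentially"
        using ineq ev_h ev_c ev_M
      proof eventually_elim
        case (elim j)
        have Mp: "real (M j) > 0" using Mge[of j] by simp
        have "real (M j) * (d/2) \<le> real (M j) * max 0 (h (?t j) (?x j) - ?W j)"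
        proof (rule mult_left_mono)
          show "d/2 \<le> max 0 (h (?t j) (?x j) - ?W j)"
            using elim(2) max.cobounded2[of 0 "h (?t j) (?x j) - ?W j"] by linarith
        qed (use Mp in simp)
        also have "\<dots> < c0 + 1" using elim(1,3) by linarith
        finally have 1: "real (M j) * (d/2) < c0 + 1" .
        have "2 * (c0 + 1) / d * (d/2) < real (M j) * (d/2)"
          by (rule mult_strict_right_mono[OF elim(4) d(2)])
        moreover have "2 * (c0 + 1) / d * (d/2) = c0 + 1" using d by (simp add: field_simps)
        ultimately have "c0 + 1 < real (M j) * (d/2)" by linarith
        thus False using 1 by linarith
      qed
      thus False by simp
    qed
    show ?thesis using part1 part2 by simp
  qed
  show ?thesis unfolding visc_super_obst_def using lsc termc main by blast
qed


end
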